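(* Let $\mathbf{k}$ be a commutative ring and $H$ a commutative connected graded $\mathbf{k}$-Hopf algebra with antipode $S_H$. Let $\beta_H:H\to H\otimes\mathrm{QSym}_{\mathbf{k}}$ be given by $\beta_H(h)=\sum_{\alpha\in\mathrm{Comp}}\xi_\alpha(h)\otimes M_\alpha$. Then $$S_H=(\mathrm{id}_H\otimes(\varepsilon_P\circ S_{\mathrm{QSym}_{\mathbf{k}}}))\circ\beta_H,$$ where $S_{\mathrm{QSym}_{\mathbf{k}}}$ is the antipode of $\mathrm{QSym}_{\mathbf{k}}$ and $H\otimes\mathbf{k}$ is identified with $H$.
   Context: A composition is a finite sequence of positive integers; $\mathrm{Comp}$ the set of compositions. $\mathrm{QSym}_{\mathbf{k}}\subseteq\mathbf{k}[[x_1,x_2,\ldots]]$ is the Hopf algebra of quasisymmetric functions with monomial basis $M_\alpha=\sum_{1\le i_1<\cdots<i_\ell}x_{i_1}^{\alpha_1}\cdots x_{i_\ell}^{\alpha_\ell}$ for $\alpha=(\alpha_1,\ldots,\alpha_\ell)$. $\varepsilon_P:\mathrm{QSym}_{\mathbf{k}}\to\mathbf{k}$ is $f\mapsto f(1,0,0,\ldots)$. For $\alpha=(a_1,\ldots,a_k)$, $\xi_\alpha=m^{(k-1)}\circ\pi_\alpha\circ\Delta^{(k-1)}:H\to H$, where $\Delta^{(k-1)}:H\to H^{\otimes k}$ is the iterated comultiplication ($\Delta^{(-1)}=\varepsilon$, $\Delta^{(0)}=\mathrm{id}$, $\Delta^{(k)}=(\mathrm{id}\otimes\Delta^{(k-1)})\circ\Delta$),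 $m^{(k-1)}:H^{\otimes k}\to H$ is $h_1\otimes\cdots\otimes h_k\mapsto h_1\cdots h_k$ ($m^{(-1)}$ the unit), and $\pi_\alpha=\pi_{a_1}\otimes\cdots\otimes\pi_{a_k}$ with $\pi_n:H\to H$ the projection onto the degree-$n$ component $H_n$. The sum defining $\beta_H(h)$ has finitely many nonzero terms. *)

theory Defs
  imports Main "HOL-Library.Groups_Big_Fun"
begin

definition is_comp :: "nat list \<Rightarrow> bool" where
  "is_comp \<alpha> \<longleftrightarrow> (\<forall>a\<in>set \<alpha>. 0 < a)"

text \<open>An element of QSym_k is represented by its (finitely supported) coefficient
  function in the monomial basis (M_alpha) indexed by compositions.\<close>

definition qsym_M :: "nat list \<Rightarrow> nat list \<Rightarrow> 'k::comm_ring_1" where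
  "qsym_M \<alpha> = (\<lambda>\<gamma>. if \<gamma> = \<alpha> then 1 else 0)"

text \<open>Quasi-shuffles (stuffles): M_a * M_b = sum of M_g over g in stuffle a b.\<close>
fun stuffle :: "nat list \<Rightarrow> nat list \<Rightarrow> nat list list" where
  "stuffle [] b = [b]"
| "stuffle a [] = [a]"
| "stuffle (x # a) (y # b) =
     map ((#) x) (stuffle a (y # b)) @ map ((#) y) (stuffle (x # a) b)
     @ map ((#) (x + y)) (stuffle a b)"

definition qsym_mult :: "(nat list \<Rightarrow> 'k::comm_ring_1) \<Rightarrow> (nat list \<Rightarrow> 'k) \<Rightarrow> nat list \<Rightarrow> 'k" where
  "qsym_mult f g = (\<lambda>\<gamma>. Sum_any (\<lambda>(\<alpha>, \<beta>). f \<alpha> * g \<beta> * of_nat (count_list (stuffle \<alpha> \<beta>) \<gamma>)))"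

text \<open>Antipode of QSym on the basis: the unique map with m (S x id) Delta = u eps,
  where Delta(M_alpha) = sum over alpha = beta gamma of M_beta (x) M_gamma
  (deconcatenation) and eps(M_alpha) = [alpha = ()].\<close>
function qsym_S_M :: "nat list \<Rightarrow> nat list \<Rightarrow> 'k::comm_ring_1" where
  "qsym_S_M \<alpha> = (if \<alpha> = [] then qsym_M []
      else (\<lambda>\<gamma>. - sum_list (map (\<lambda>i. qsym_mult (qsym_S_M (take i \<alpha>)) (qsym_M (drop i \<alpha>)) \<gamma>)
                              [0..<length \<alpha>])))"
  by pat_completeness auto
termination
  by (relation "measure length") auto

definition qsym_S :: "(nat list \<Rightarrow> 'k::comm_ring_1) \<Rightarrow> nat list \<Rightarrow> 'k" where
  "qsym_S f = (\<lambda>\<gamma>. Sum_any (\<lambda>\<alpha>. f \<alpha> * qsym_S_M \<alpha> \<gamma>))"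

text \<open>Evaluation of M_alpha at a point x = (x_0, x_1, ...) with x_i = 0 for i >= N:
  M_alpha(x) = sum over i_1 < ... < i_l of x_{i_1}^{a_1} ... x_{i_l}^{a_l}
  (indices i >= N contribute 0 since all parts are positive).\<close>
definition M_eval :: "(nat \<Rightarrow> 'k::comm_ring_1) \<Rightarrow> nat \<Rightarrow> nat list \<Rightarrow> 'k" where
  "M_eval x N \<alpha> =
     (\<Sum>is \<in> {is. length is = length \<alpha> \<and> sorted_wrt (<) is \<and> set is \<subseteq> {..<N}}.
        prod_list (map (\<lambda>(i, a). x i ^ a) (zip is \<alpha>)))"

definition eps_P :: "(nat list \<Rightarrow> 'k::comm_ring_1) \<Rightarrow> 'k" where
  "eps_P f = Sum_any (\<lambda>\<alpha>. f \<alpha> * M_eval (\<lambda>i. if i = 0 then 1 else 0) 1 \<alpha>)"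

text \<open>H is the type 'h (a commutative ring) with a k-module structure smult.
  Tensors in H (x) H are represented in Sweedler style as finite lists of pairs;
  H (x) H (x) H likewise.  Two such representatives are identified when every
  k-multilinear map into H takes the same value on them.\<close>

definition k_algebra :: "('k::comm_ring_1 \<Rightarrow> 'h::comm_ring_1 \<Rightarrow> 'h) \<Rightarrow> bool" where
  "k_algebra sm \<longleftrightarrow>
     (\<forall>c d x. sm (c + d) x = sm c x + sm d x) \<and>
     (\<forall>c x y. sm c (x + y) = sm c x + sm c y) \<and>
     (\<forall>c d x. sm (c * d) x = sm c (sm d x)) \<and>
     (\<forall>x. sm 1 x = x) \<and>
     (\<forall>c x y. sm c (x * y) = sm c x * y)"

definition k_linear :: "('k::comm_ring_1 \<Rightarrow> 'h::comm_ring_1 \<Rightarrow> 'h) \<Rightarrow> ('h \<Rightarrow> 'h) \<Rightarrow> bool" where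
  "k_linear sm f \<longleftrightarrow> (\<forall>x y. f (x + y) = f x + f y) \<and> (\<forall>c x. f (sm c x) = sm c (f x))"

definition k_bilinear :: "('k::comm_ring_1 \<Rightarrow> 'h::comm_ring_1 \<Rightarrow> 'h) \<Rightarrow> ('h \<Rightarrow> 'h \<Rightarrow> 'h) \<Rightarrow> bool" where
  "k_bilinear sm B \<longleftrightarrow> (\<forall>a. k_linear sm (B a)) \<and> (\<forall>b. k_linear sm (\<lambda>a. B a b))"

definition k_trilinear :: "('k::comm_ring_1 \<Rightarrow> 'h::comm_ring_1 \<Rightarrow> 'h) \<Rightarrow> ('h \<Rightarrow> 'h \<Rightarrow> 'h \<Rightarrow> 'h) \<Rightarrow> bool" where
  "k_trilinear sm T \<longleftrightarrow> (\<forall>a b. k_linear sm (T a b)) \<and> (\<forall>a c. k_linear sm (\<lambda>b. T a b c))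
      \<and> (\<forall>b c. k_linear sm (\<lambda>a. T a b c))"

definition teq2 :: "('k::comm_ring_1 \<Rightarrow> 'h::comm_ring_1 \<Rightarrow> 'h) \<Rightarrow> ('h \<times> 'h) list \<Rightarrow> ('h \<times> 'h) list \<Rightarrow> bool" where
  "teq2 sm t u \<longleftrightarrow> (\<forall>B. k_bilinear sm B \<longrightarrow>
      sum_list (map (\<lambda>(a, b). B a b) t) = sum_list (map (\<lambda>(a, b). B a b) u))"

definition comm_connected_graded_hopf ::
  "('k::comm_ring_1 \<Rightarrow> 'h::comm_ring_1 \<Rightarrow> 'h) \<Rightarrow> (nat \<Rightarrow> 'h \<Rightarrow> 'h) \<Rightarrow>
   ('h \<Rightarrow> ('h \<times> 'h) list) \<Rightarrow> ('h \<Rightarrow> 'k) \<Rightarrow> ('h \<Rightarrow> 'h) \<Rightarrow> bool" where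
  "comm_connected_graded_hopf sm proj \<Delta> \<epsilon> S \<longleftrightarrow>
     k_algebra sm \<and>
     \<comment> \<open>grading: H = direct sum of the H_n, pi_n the projections\<close>
     (\<forall>n. k_linear sm (proj n)) \<and>
     (\<forall>m n x. proj m (proj n x) = (if m = n then proj n x else 0)) \<and>
     (\<forall>x. \<exists>N. x = (\<Sum>n\<le>N. proj n x)) \<and>
     proj 0 1 = 1 \<and>
     (\<forall>m p q x y. proj m (proj p x * proj q y) = (if m = p + q then proj p x * proj q y else 0)) \<and>
     \<comment> \<open>connected: H_0 = k 1\<close>
     (\<forall>x. \<exists>c. proj 0 x = sm c 1) \<and>
     \<comment> \<open>counit: a graded k-algebra map\<close>
     (\<forall>x y. \<epsilon> (x + y) = \<epsilon> x + \<epsilon> y) \<and> (\<forall>c x. \<epsilon> (sm c x) = c * \<epsilon> x) \<and>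
     (\<forall>x y. \<epsilon> (x * y) = \<epsilon> x * \<epsilon> y) \<and> \<epsilon> 1 = 1 \<and>
     (\<forall>n x. 0 < n \<longrightarrow> \<epsilon> (proj n x) = 0) \<and>
     \<comment> \<open>comultiplication: k-linear, graded, coassociative, counital, algebra map\<close>
     (\<forall>x y. teq2 sm (\<Delta> (x + y)) (\<Delta> x @ \<Delta> y)) \<and>
     (\<forall>c x. teq2 sm (\<Delta> (sm c x)) (map (\<lambda>(a, b). (sm c a, b)) (\<Delta> x))) \<and>
     (\<forall>n x. teq2 sm (\<Delta> (proj n x))
        (concat (map (\<lambda>p. map (\<lambda>(a, b). (proj p a, proj (n - p) b)) (\<Delta> x)) [0..<Suc n]))) \<and>
     (\<forall>T x. k_trilinear sm T \<longrightarrow>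
        sum_list (map (\<lambda>(a, b). sum_list (map (\<lambda>(c, d). T c d b) (\<Delta> a))) (\<Delta> x)) =
        sum_list (map (\<lambda>(a, b). sum_list (map (\<lambda>(c, d). T a c d) (\<Delta> b))) (\<Delta> x))) \<and>
     (\<forall>x. sum_list (map (\<lambda>(a, b). sm (\<epsilon> a) b) (\<Delta> x)) = x) \<and>
     (\<forall>x. sum_list (map (\<lambda>(a, b). sm (\<epsilon> b) a) (\<Delta> x)) = x) \<and>
     (\<forall>x y. teq2 sm (\<Delta> (x * y))
        (concat (map (\<lambda>(a, b). map (\<lambda>(c, d). (a * c, b * d)) (\<Delta> y)) (\<Delta> x)))) \<and>
     teq2 sm (\<Delta> 1) [(1, 1)] \<and>
     \<comment> \<open>antipode\<close>
     k_linear sm S \<and>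
     (\<forall>x. sum_list (map (\<lambda>(a, b). S a * b) (\<Delta> x)) = sm (\<epsilon> x) 1) \<and>
     (\<forall>x. sum_list (map (\<lambda>(a, b). a * S b) (\<Delta> x)) = sm (\<epsilon> x) 1)"

fun coprod_iter :: "('h \<Rightarrow> ('h \<times> 'h) list) \<Rightarrow> nat \<Rightarrow> 'h \<Rightarrow> 'h list list" where
  "coprod_iter \<Delta> 0 h = [[h]]"
| "coprod_iter \<Delta> (Suc k) h =
     concat (map (\<lambda>(a, b). map ((#) a) (coprod_iter \<Delta> k b)) (\<Delta> h))"

text \<open>xi_alpha = m^(k-1) o pi_alpha o Delta^(k-1); for alpha = () this is u o eps.\<close>
definition xi :: "('k::comm_ring_1 \<Rightarrow> 'h::comm_ring_1 \<Rightarrow> 'h) \<Rightarrow> (nat \<Rightarrow> 'h \<Rightarrow> 'h) \<Rightarrow>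
    ('h \<Rightarrow> ('h \<times> 'h) list) \<Rightarrow> ('h \<Rightarrow> 'k) \<Rightarrow> nat list \<Rightarrow> 'h \<Rightarrow> 'h" where
  "xi sm proj \<Delta> \<epsilon> \<alpha> h =
     (if \<alpha> = [] then sm (\<epsilon> h) 1
      else sum_list (map (\<lambda>t. prod_list (map (\<lambda>(a, x). proj a x) (zip \<alpha> t)))
                         (coprod_iter \<Delta> (length \<alpha> - 1) h)))"

end

theory Submission
  imports Defs
begin


declare qsym_S_M.simps[simp del]

lemma sum_list_zero: "(\<And>i. i \<in> set xs \<Longrightarrow> f i = 0) \<Longrightarrow> sum_list (map f xs) = (0::'a::monoid_add)"
  by (induction xs) auto

lemma stuffle_len: "x \<in> set (stuffle a b) \<Longrightarrow> length a \<le> length x \<and> length b \<le> length x"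
  by (induction a b arbitrary: x rule: stuffle.induct) fastforce+

lemma mult_nil: "\<delta> \<noteq> [] \<Longrightarrow> qsym_mult f (qsym_M \<delta>) [] = (0::'k::comm_ring_1)"
proof -
  assume d: "\<delta> \<noteq> []"
  have "(\<lambda>(\<alpha>, \<beta>). f \<alpha> * qsym_M \<delta> \<beta> * of_nat (count_list (stuffle \<alpha> \<beta>) []) :: 'k) = (\<lambda>_. 0)"
  proof (rule ext, clarify)
    fix a b
    show "f a * qsym_M \<delta> b * of_nat (count_list (stuffle a b) []) = (0::'k)"
    proof (cases "b = \<delta>")
      case True
      then have "[] \<notin> set (stuffle a b)" using stuffle_len[of "[]" a b] d by auto
      then show ?thesis by (simp add: count_notin)
    qed (simp add: qsym_M_def)
  qed
  then show ?thesis unfolding qsym_mult_def by simp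
qed

lemma mult_long: "2 \<le> length \<delta> \<Longrightarrow> qsym_mult f (qsym_M \<delta>) [n] = (0::'k::comm_ring_1)"
proof -
  assume d: "2 \<le> length \<delta>"
  have "(\<lambda>(\<alpha>, \<beta>). f \<alpha> * qsym_M \<delta> \<beta> * of_nat (count_list (stuffle \<alpha> \<beta>) [n]) :: 'k) = (\<lambda>_. 0)"
  proof (rule ext, clarify)
    fix a b
    show "f a * qsym_M \<delta> b * of_nat (count_list (stuffle a b) [n]) = (0::'k)"
    proof (cases "b = \<delta>")
      case True
      then have "[n] \<notin> set (stuffle a b)" using stuffle_len[of "[n]" a b] d by auto
      then show ?thesis by (simp add: count_notin)
    qed (simp add: qsym_M_def)
  qed
  then show ?thesis unfolding qsym_mult_def by simp
qed

lemma mult_single: "qsym_mult f (qsym_M [d]) [n] =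
   (if n = d then f [] else 0) + (if d \<le> n then f [n - d] else (0::'k::comm_ring_1))"
proof -
  define g where "g = (\<lambda>(\<alpha>, \<beta>). f \<alpha> * qsym_M [d] \<beta> * of_nat (count_list (stuffle \<alpha> \<beta>) [n]) :: 'k)"
  have sub: "{p. g p \<noteq> 0} \<subseteq> {([],[d]), ([n-d],[d])}"
  proof (rule subsetI)
    fix p assume "p \<in> {p. g p \<noteq> 0}"
    then obtain a b where pab: "p = (a, b)" and ne: "g (a, b) \<noteq> 0" by (cases p) auto
    then have bd: "b = [d]" by (auto simp: g_def qsym_M_def split: if_splits)
    have "count_list (stuffle a [d]) [n] \<noteq> 0" using ne bd by (cases "count_list (stuffle a [d]) [n] = 0") (auto simp: g_def)
    then have mem: "[n] \<in> set (stuffle a [d])" by (simp add: count_list_0_iff)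
    then have "length a \<le> 1" using stuffle_len[OF mem] by simp
    then consider "a = []" | m where "a = [m]" by (cases a) auto
    then show "p \<in> {([], [d]), ([n - d], [d])}"
    proof cases
      case 1 then show ?thesis using bd pab by simp
    next
      case 2 then show ?thesis using bd mem pab by auto
    qed
  qed
  have "qsym_mult f (qsym_M [d]) [n] = Sum_any g" unfolding qsym_mult_def g_def by simp
  also have "\<dots> = sum g {([],[d]), ([n-d],[d])}" by (rule Sum_any.expand_superset[OF _ sub]) simp
  also have "\<dots> = g ([],[d]) + g ([n-d],[d])" by simp
  also have "\<dots> = (if n = d then f [] else 0) + (if d \<le> n then f [n - d] else 0)"
    by (auto simp: g_def qsym_M_def)
  finally show ?thesis .
qed

lemma SM_nil: "qsym_S_M [] = qsym_M []" by (subst qsym_S_M.simps) simp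

lemma SM_ne: "\<alpha> \<noteq> [] \<Longrightarrow> qsym_S_M \<alpha> \<gamma> =
  - sum_list (map (\<lambda>i. qsym_mult (qsym_S_M (take i \<alpha>)) (qsym_M (drop i \<alpha>)) \<gamma>) [0..<length \<alpha>])"
  by (subst qsym_S_M.simps) simp

lemma SM_at_nil: "qsym_S_M \<alpha> [] = (if \<alpha> = [] then 1 else (0::'k::comm_ring_1))"
proof (cases "\<alpha> = []")
  case True then show ?thesis by (simp add: SM_nil qsym_M_def)
next
  case False
  have "sum_list (map (\<lambda>i. qsym_mult (qsym_S_M (take i \<alpha>)) (qsym_M (drop i \<alpha>)) [] :: 'k) [0..<length \<alpha>])
      = 0"
    by (rule sum_list_zero) (auto intro!: mult_nil)
  then show ?thesis using False by (simp add: SM_ne)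
qed

lemma SM_at_single: "qsym_S_M (\<beta> @ [d]) [n] = - ((if n = d then qsym_S_M \<beta> [] else 0)
    + (if d \<le> n then qsym_S_M \<beta> [n - d] else (0::'k::comm_ring_1)))"
proof -
  have "sum_list (map (\<lambda>i. qsym_mult (qsym_S_M (take i (\<beta>@[d]))) (qsym_M (drop i (\<beta>@[d]))) [n] :: 'k) [0..<length \<beta>])
      = 0"
    by (rule sum_list_zero) (auto intro!: mult_long)
  moreover have "take (length \<beta>) (\<beta>@[d]) = \<beta>" "drop (length \<beta>) (\<beta>@[d]) = [d]" by simp_all
  ultimately show ?thesis by (simp add: SM_ne mult_single del: take_append drop_append)
qed

lemma SM_single_supp: "qsym_S_M \<alpha> [n] \<noteq> (0::'k::comm_ring_1) \<Longrightarrow> n = sum_list \<alpha>"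
proof (induction \<alpha> arbitrary: n rule: rev_induct)
  case Nil then show ?case by (simp add: SM_nil qsym_M_def)
next
  case (snoc d \<beta>)
  show ?case
  proof (rule ccontr)
    assume ne: "n \<noteq> sum_list (\<beta> @ [d])"
    have "(if n = d then qsym_S_M \<beta> [] else 0) = (0::'k)"
      using ne by (auto simp: SM_at_nil)
    moreover have "(if d \<le> n then qsym_S_M \<beta> [n - d] else 0) = (0::'k)"
    proof (cases "d \<le> n")
      case True
      have "qsym_S_M \<beta> [n - d] = (0::'k)"
      proof (rule ccontr)
        assume "qsym_S_M \<beta> [n - d] \<noteq> (0::'k)"
        then have "n - d = sum_list \<beta>" using snoc.IH by blast
        then show False using ne True by simp
      qed
      then show ?thesis by simp
    qed simp
    ultimately show False using snoc.prems by (simp add: SM_at_single)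
  qed
qed

lemma M_eval_pt: "M_eval (\<lambda>i. if i = 0 then 1 else 0) (Suc 0) \<gamma> = (if length \<gamma> \<le> 1 then 1 else (0::'k::comm_ring_1))"
proof -
  consider "\<gamma> = []" | a where "\<gamma> = [a]" | a b c where "\<gamma> = a # b # c"
    by (metis list.exhaust)
  then show ?thesis
  proof cases
    case 1
    have E: "{is::nat list. length is = length \<gamma> \<and> sorted_wrt (<) is \<and> set is \<subseteq> {..<Suc 0}} = {[]}" using 1 by auto
    show ?thesis unfolding M_eval_def E using 1 by simp
  next
    case 2
    have E: "{is::nat list. length is = length \<gamma> \<and> sorted_wrt (<) is \<and> set is \<subseteq> {..<Suc 0}} = {[0]}"
      using 2 by (auto simp: length_Suc_conv)
    show ?thesis unfolding M_eval_def E using 2 by simp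
  next
    case 3
    have E: "{is::nat list. length is = length \<gamma> \<and> sorted_wrt (<) is \<and> set is \<subseteq> {..<Suc 0}} = {}"
      using 3 by (auto simp: length_Suc_conv)
    show ?thesis unfolding M_eval_def E using 3 by simp
  qed
qed

lemma eps_SM_aux: "eps_P (qsym_S_M \<alpha>) = qsym_S_M \<alpha> [] + (qsym_S_M \<alpha> [sum_list \<alpha>] :: 'k::comm_ring_1)"
proof -
  define g where "g = (\<lambda>\<gamma>. qsym_S_M \<alpha> \<gamma> * M_eval (\<lambda>i. if i = 0 then 1 else 0) 1 \<gamma> :: 'k)"
  have sub: "{\<gamma>. g \<gamma> \<noteq> 0} \<subseteq> {[], [sum_list \<alpha>]}"
  proof clarify
    fix \<gamma> assume ne: "g \<gamma> \<noteq> 0" and n1: "\<gamma> \<noteq> []"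
    then have "length \<gamma> \<le> 1" by (cases "length \<gamma> \<le> 1") (auto simp: g_def M_eval_pt)
    then obtain m where m: "\<gamma> = [m]" using n1 by (cases \<gamma>) auto
    then have "qsym_S_M \<alpha> [m] \<noteq> (0::'k)" using ne by (auto simp: g_def)
    then show "\<gamma> = [sum_list \<alpha>]" using SM_single_supp m by blast
  qed
  have "eps_P (qsym_S_M \<alpha>) = Sum_any g" unfolding eps_P_def g_def ..
  also have "\<dots> = sum g {[], [sum_list \<alpha>]}" by (rule Sum_any.expand_superset[OF _ sub]) simp
  also have "\<dots> = qsym_S_M \<alpha> [] + qsym_S_M \<alpha> [sum_list \<alpha>]" by (simp add: g_def M_eval_pt)
  finally show ?thesis .
qed

lemma eps_SM: "eps_P (qsym_S_M \<alpha>) = ((-1) ^ length \<alpha> :: 'k::comm_ring_1)"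
proof (induction \<alpha> rule: rev_induct)
  case Nil then show ?case by (simp only: eps_SM_aux) (simp add: SM_nil qsym_M_def)
next
  case (snoc d \<beta>)
  have e: "(if sum_list \<beta> + d = d then qsym_S_M \<beta> [] else 0) = (qsym_S_M \<beta> [] :: 'k)"
    by (auto simp: SM_at_nil)
  have "eps_P (qsym_S_M (\<beta> @ [d])) = - (qsym_S_M \<beta> [] + (qsym_S_M \<beta> [sum_list \<beta>] :: 'k))"
    using e by (simp add: eps_SM_aux SM_at_nil SM_at_single)
  also have "\<dots> = - eps_P (qsym_S_M \<beta>)" by (simp only: eps_SM_aux)
  finally show ?case using snoc.IH by simp
qed

lemma qsym_S_M_eq: "qsym_S (qsym_M \<alpha>) = qsym_S_M \<alpha>"
proof
  fix \<gamma>
  have "qsym_S (qsym_M \<alpha>) \<gamma> = sum (\<lambda>\<beta>. qsym_M \<alpha> \<beta> * qsym_S_M \<beta> \<gamma>) {\<alpha>}"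
    unfolding qsym_S_def by (rule Sum_any.expand_superset) (auto simp: qsym_M_def)
  then show "qsym_S (qsym_M \<alpha>) \<gamma> = qsym_S_M \<alpha> \<gamma>" by (simp add: qsym_M_def)
qed

lemma eps_S_M: "eps_P (qsym_S (qsym_M \<alpha> :: nat list \<Rightarrow> 'k)) = ((-1) ^ length \<alpha> :: 'k::comm_ring_1)"
  by (simp add: qsym_S_M_eq eps_SM)




definition sl :: "('h \<Rightarrow> 'h \<Rightarrow> 'h::comm_ring_1) \<Rightarrow> ('h \<times> 'h) list \<Rightarrow> 'h" where
  "sl B L = sum_list (map (\<lambda>(a, b). B a b) L)"

lemma sl_Nil[simp]: "sl B [] = 0" and sl_Cons[simp]: "sl B (p # L) = B (fst p) (snd p) + sl B L"
  by (auto simp: sl_def split: prod.splits)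

lemma sl_append[simp]: "sl B (L @ M) = sl B L + sl B M" by (induction L) auto

lemma sl_cong: "(\<And>a b. (a, b) \<in> set L \<Longrightarrow> B a b = C a b) \<Longrightarrow> sl B L = sl C L"
proof (induction L)
  case (Cons p L) then show ?case by (cases p) auto
qed simp

lemma sl_zero: "(\<And>a b. (a, b) \<in> set L \<Longrightarrow> B a b = 0) \<Longrightarrow> sl B L = 0"
proof (induction L)
  case (Cons p L) then show ?case by (cases p) auto
qed simp

lemma sl_map: "sl B (map (\<lambda>(a, b). (f a, g b)) L) = sl (\<lambda>a b. B (f a) (g b)) L"
  by (induction L) (auto split: prod.splits)

lemma sl_mult_right: "sl B L * y = sl (\<lambda>a b. B a b * y) L"
  by (induction L) (auto simp: algebra_simps)

lemma sl_mult_left: "y * sl B L = sl (\<lambda>a b. y * B a b) L"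
  by (induction L) (auto simp: algebra_simps)

lemma sl_sum: "sl (\<lambda>a b. \<Sum>i\<in>A. B i a b) L = (\<Sum>i\<in>A. sl (B i) L)"
  by (induction L) (auto simp: sum.distrib)

lemma sl_neg: "sl (\<lambda>a b. - B a b) L = - sl B L"
  by (induction L) auto

lemma sl_concat: "sl B (concat (map F xs)) = sum_list (map (\<lambda>x. sl B (F x)) xs)"
  by (induction xs) auto

lemma k_linear_zero: "k_linear sm f \<Longrightarrow> f 0 = 0"
  unfolding k_linear_def by (metis add_cancel_left_right add_0)

lemma k_linear_sl: "k_linear sm f \<Longrightarrow> f (sl B L) = sl (\<lambda>a b. f (B a b)) L"
  by (induction L) (auto simp: k_linear_zero, auto simp: k_linear_def)

lemma k_linear_sum: "k_linear sm f \<Longrightarrow> f (sum g A) = (\<Sum>i\<in>A. f (g i))"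
  by (induction A rule: infinite_finite_induct) (auto simp: k_linear_zero, auto simp: k_linear_def)

lemma k_linear_neg: "k_linear sm f \<Longrightarrow> f (- x) = - f x"
  by (metis add_eq_0_iff k_linear_def k_linear_zero neg_eq_iff_add_eq_0)

locale HA =
  fixes sm :: "'k::comm_ring_1 \<Rightarrow> 'h::comm_ring_1 \<Rightarrow> 'h"
    and proj :: "nat \<Rightarrow> 'h \<Rightarrow> 'h"
    and D :: "'h \<Rightarrow> ('h \<times> 'h) list"
    and e :: "'h \<Rightarrow> 'k"
    and S :: "'h \<Rightarrow> 'h"
  assumes hopf: "comm_connected_graded_hopf sm proj D e S"
begin

lemma kalg: "k_algebra sm" using hopf by (simp add: comm_connected_graded_hopf_def)

lemma sm_add_l: "sm (c + d) x = sm c x + sm d x" using kalg by (simp add: k_algebra_def)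
lemma sm_add_r: "sm c (x + y) = sm c x + sm c y" using kalg by (simp add: k_algebra_def)
lemma sm_assoc: "sm (c * d) x = sm c (sm d x)" using kalg by (simp add: k_algebra_def)
lemma sm_one: "sm 1 x = x" using kalg by (simp add: k_algebra_def)
lemma sm_mult: "sm c (x * y) = sm c x * y" using kalg by (simp add: k_algebra_def)
lemma sm_mult_r: "sm c (x * y) = x * sm c y" by (metis sm_mult mult.commute)
lemma sm_zero_r: "sm c 0 = 0" by (metis add_cancel_left_right sm_add_r add_0)
lemma sm_zero_l: "sm 0 x = 0" by (metis add_cancel_left_right sm_add_l add_0)
lemma sm_neg1: "sm (-1) x = - x"
proof -
  have "sm (1 + -1) x = 0" by (simp add: sm_zero_l)
  then show ?thesis by (simp only: sm_add_l sm_one) (simp add: eq_neg_iff_add_eq_0 add.commute)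
qed

lemma lin_sm: "k_linear sm (sm c)"
  unfolding k_linear_def by (metis sm_add_r sm_assoc mult.commute)

lemma lin_id: "k_linear sm (\<lambda>x. x)" by (simp add: k_linear_def)

lemma lin_proj: "k_linear sm (proj n)" using hopf by (simp add: comm_connected_graded_hopf_def)
lemma proj_proj: "proj m (proj n x) = (if m = n then proj n x else 0)"
  using hopf by (simp add: comm_connected_graded_hopf_def)
lemma proj_decomp: "\<exists>N. x = (\<Sum>n\<le>N. proj n x)"
  using hopf by (simp add: comm_connected_graded_hopf_def)
lemma connected: "\<exists>c. proj 0 x = sm c 1"
  using hopf by (simp add: comm_connected_graded_hopf_def)
lemma e_add: "e (x + y) = e x + e y" using hopf by (simp add: comm_connected_graded_hopf_def)
lemma e_sm: "e (sm c x) = c * e x" using hopf by (simp add: comm_connected_graded_hopf_def)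
lemma e_one: "e 1 = 1" using hopf by (simp add: comm_connected_graded_hopf_def)
lemma e_proj: "0 < n \<Longrightarrow> e (proj n x) = 0" using hopf by (simp add: comm_connected_graded_hopf_def)
lemma D_add_teq: "teq2 sm (D (x + y)) (D x @ D y)" using hopf by (simp add: comm_connected_graded_hopf_def)
lemma D_sm_teq: "teq2 sm (D (sm c x)) (map (\<lambda>(a, b). (sm c a, b)) (D x))"
  using hopf by (simp add: comm_connected_graded_hopf_def)
lemma D_proj_teq: "teq2 sm (D (proj n x))
        (concat (map (\<lambda>p. map (\<lambda>(a, b). (proj p a, proj (n - p) b)) (D x)) [0..<Suc n]))"
  using hopf by (simp add: comm_connected_graded_hopf_def)
lemma coassoc: "k_trilinear sm T \<Longrightarrow>
        sum_list (map (\<lambda>(a, b). sum_list (map (\<lambda>(c, d). T c d b) (D a))) (D x)) =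
        sum_list (map (\<lambda>(a, b). sum_list (map (\<lambda>(c, d). T a c d) (D b))) (D x))"
  using hopf by (simp add: comm_connected_graded_hopf_def)
lemma counit_l: "sl (\<lambda>a b. sm (e a) b) (D x) = x"
  using hopf by (simp add: comm_connected_graded_hopf_def sl_def)
lemma counit_r: "sl (\<lambda>a b. sm (e b) a) (D x) = x"
  using hopf by (simp add: comm_connected_graded_hopf_def sl_def)
lemma D_one_teq: "teq2 sm (D 1) [(1, 1)]" using hopf by (simp add: comm_connected_graded_hopf_def)
lemma lin_S: "k_linear sm S" using hopf by (simp add: comm_connected_graded_hopf_def)
lemma antipode: "sl (\<lambda>a b. S a * b) (D x) = sm (e x) 1"
  using hopf by (simp add: comm_connected_graded_hopf_def sl_def)

lemma e_zero: "e 0 = 0" by (metis add_cancel_left_right e_add add_0)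
lemma e_sum: "e (sum g A) = (\<Sum>i\<in>A. e (g i))"
  by (induction A rule: infinite_finite_induct) (auto simp: e_zero e_add)

lemma bilin_prod: "k_linear sm f \<Longrightarrow> k_linear sm g \<Longrightarrow> k_bilinear sm (\<lambda>a b. f a * g b)"
  unfolding k_bilinear_def k_linear_def by (auto simp: sm_mult[symmetric] sm_mult_r[symmetric] distrib_left distrib_right)

lemma trilin_prod: "k_linear sm f \<Longrightarrow> k_linear sm g \<Longrightarrow> k_linear sm h \<Longrightarrow>
    k_trilinear sm (\<lambda>a b c. f a * g b * h c)"
  unfolding k_trilinear_def k_linear_def
  by (auto simp: sm_mult[symmetric] sm_mult_r[symmetric] distrib_left distrib_right)

lemma teq_sl: "teq2 sm L M \<Longrightarrow> k_bilinear sm B \<Longrightarrow> sl B L = sl B M"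
  unfolding teq2_def sl_def by blast

lemma D_add: "k_bilinear sm B \<Longrightarrow> sl B (D (x + y)) = sl B (D x) + sl B (D y)"
  using teq_sl[OF D_add_teq] by simp

lemma D_sm: "k_bilinear sm B \<Longrightarrow> sl B (D (sm c x)) = sm c (sl B (D x))"
proof -
  assume B: "k_bilinear sm B"
  have "sl B (D (sm c x)) = sl B (map (\<lambda>(a, b). (sm c a, b)) (D x))" using teq_sl[OF D_sm_teq B] .
  also have "\<dots> = sl (\<lambda>a b. B (sm c a) b) (D x)" using sl_map[of B "sm c" "\<lambda>b. b"] by simp
  also have "\<dots> = sl (\<lambda>a b. sm c (B a b)) (D x)"
    using B unfolding k_bilinear_def k_linear_def by simp
  also have "\<dots> = sm c (sl B (D x))" using k_linear_sl[OF lin_sm] by simp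
  finally show ?thesis .
qed

lemma D_proj: "k_bilinear sm B \<Longrightarrow>
   sl B (D (proj n x)) = (\<Sum>p\<le>n. sl (\<lambda>a b. B (proj p a) (proj (n - p) b)) (D x))"
proof -
  assume B: "k_bilinear sm B"
  have "sl B (D (proj n x)) = sl B (concat (map (\<lambda>p. map (\<lambda>(a, b). (proj p a, proj (n - p) b)) (D x)) [0..<Suc n]))"
    using teq_sl[OF D_proj_teq B] .
  also have "\<dots> = sum_list (map (\<lambda>p. sl (\<lambda>a b. B (proj p a) (proj (n - p) b)) (D x)) [0..<Suc n])"
    by (simp add: sl_concat sl_map)
  also have "\<dots> = (\<Sum>p\<le>n. sl (\<lambda>a b. B (proj p a) (proj (n - p) b)) (D x))"
    by (simp only: sum_set_upt_conv_sum_list_nat[symmetric] set_upt) (simp add: atLeast0LessThan lessThan_Suc_atMost)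
  finally show ?thesis .
qed

end



lemma sum_concat_pairs: "sum_list (map F (concat (map (\<lambda>(a, b). map ((#) a) (L b)) M)))
   = sl (\<lambda>a b. sum_list (map (\<lambda>t. F (a # t)) (L b))) M"
  by (induction M) (auto simp: o_def split: prod.splits)

context HA begin

abbreviation X where "X \<equiv> xi sm proj D e"

lemma xi_nil: "X [] h = sm (e h) 1" by (simp add: xi_def)
lemma xi_single: "X [a] h = proj a h" by (simp add: xi_def)
lemma xi_cons: "\<alpha> \<noteq> [] \<Longrightarrow> X (a # \<alpha>) h = sl (\<lambda>u v. proj a u * X \<alpha> v) (D h)"
proof -
  assume ne: "\<alpha> \<noteq> []"
  then obtain k where k: "length \<alpha> = Suc k" by (cases \<alpha>) auto
  have "X (a # \<alpha>) h = sum_list (map (\<lambda>t. prod_list (map (\<lambda>(a, x). proj a x) (zip (a # \<alpha>) t)))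
                         (coprod_iter D (Suc k) h))"
    by (simp add: xi_def k)
  also have "\<dots> = sl (\<lambda>u v. sum_list (map (\<lambda>t. proj a u * prod_list (map (\<lambda>(a, x). proj a x) (zip \<alpha> t))) (coprod_iter D k v))) (D h)"
    by (simp only: coprod_iter.simps sum_concat_pairs) simp
  also have "\<dots> = sl (\<lambda>u v. proj a u * X \<alpha> v) (D h)"
    by (simp add: xi_def k ne sum_list_const_mult)
  finally show ?thesis .
qed

lemma lin_X: "k_linear sm (X \<alpha>)"
proof (induction \<alpha>)
  case Nil
  show ?case unfolding k_linear_def xi_nil by (simp add: e_add e_sm sm_add_l sm_assoc)
next
  case (Cons a \<alpha>)
  show ?case
  proof (cases "\<alpha> = []")
    case True then show ?thesis using lin_proj by (simp add: xi_single)
  next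
    case False
    have B: "k_bilinear sm (\<lambda>u v. proj a u * X \<alpha> v)" by (rule bilin_prod[OF lin_proj Cons.IH])
    show ?thesis unfolding k_linear_def xi_cons[OF False] using D_add[OF B] D_sm[OF B] by simp
  qed
qed

lemma X_zero: "X \<alpha> 0 = 0" by (rule k_linear_zero[OF lin_X])

lemma X_proj: "n \<noteq> sum_list \<alpha> \<Longrightarrow> X \<alpha> (proj n x) = 0"
proof (induction \<alpha> arbitrary: n x)
  case Nil
  then show ?case by (simp add: xi_nil e_proj sm_zero_l)
next
  case (Cons a \<alpha>)
  show ?case
  proof (cases "\<alpha> = []")
    case True then show ?thesis using Cons.prems by (simp add: xi_single proj_proj)
  next
    case False
    have B: "k_bilinear sm (\<lambda>u v. proj a u * X \<alpha> v)" by (rule bilin_prod[OF lin_proj lin_X])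
    have "X (a # \<alpha>) (proj n x) = (\<Sum>p\<le>n. sl (\<lambda>u v. proj a (proj p u) * X \<alpha> (proj (n - p) v)) (D x))"
      by (simp only: xi_cons[OF False] D_proj[OF B])
    also have "\<dots> = 0"
    proof (rule sum.neutral, rule ballI, rule sl_zero)
      fix p u v assume p: "p \<in> {..n}"
      show "proj a (proj p u) * X \<alpha> (proj (n - p) v) = 0"
      proof (cases "p = a")
        case True
        then have "n - p \<noteq> sum_list \<alpha>" using Cons.prems p by auto
        then show ?thesis using Cons.IH by simp
      qed (simp add: proj_proj)
    qed
    finally show ?thesis .
  qed
qed

lemma X_eq_proj: "X \<alpha> x = X \<alpha> (proj (sum_list \<alpha>) x)"
proof -
  obtain N where N: "x = (\<Sum>n\<le>N. proj n x)" using proj_decomp by blast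
  have "X \<alpha> x = (\<Sum>n\<le>N. X \<alpha> (proj n x))" by (subst N) (rule k_linear_sum[OF lin_X])
  also have "\<dots> = (\<Sum>n\<in>{..N} \<inter> {sum_list \<alpha>}. X \<alpha> (proj n x))"
    by (rule sum.mono_neutral_right) (auto simp: X_proj)
  also have "\<dots> = X \<alpha> (proj (sum_list \<alpha>) x)"
  proof (cases "sum_list \<alpha> \<le> N")
    case False
    have "proj (sum_list \<alpha>) x = (\<Sum>n\<le>N. proj (sum_list \<alpha>) (proj n x))"
      by (subst N) (rule k_linear_sum[OF lin_proj])
    also have "\<dots> = 0" using False by (intro sum.neutral) (auto simp: proj_proj)
    finally show ?thesis using False by (simp add: X_zero)
  qed simp
  finally show ?thesis .
qed

lemma X_nonzero_le: "x = (\<Sum>n\<le>N. proj n x) \<Longrightarrow> X \<alpha> x \<noteq> 0 \<Longrightarrow> sum_list \<alpha> \<le> N"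
proof (rule ccontr)
  assume N: "x = (\<Sum>n\<le>N. proj n x)" and ne: "X \<alpha> x \<noteq> 0" and le: "\<not> sum_list \<alpha> \<le> N"
  have "X \<alpha> x = (\<Sum>n\<le>N. X \<alpha> (proj n x))" by (subst N) (rule k_linear_sum[OF lin_X])
  also have "\<dots> = 0" using le by (intro sum.neutral) (auto simp: X_proj)
  finally show False using ne by simp
qed

lemma X_snoc: "X (\<beta> @ [d]) x = sl (\<lambda>u v. X \<beta> u * proj d v) (D x)"
proof (induction \<beta> arbitrary: x)
  case Nil
  have "sl (\<lambda>u v. X [] u * proj d v) (D x) = sl (\<lambda>u v. proj d (sm (e u) v)) (D x)"
    using lin_proj unfolding k_linear_def by (simp add: xi_nil sm_mult[symmetric])
  also have "\<dots> = proj d x" by (simp add: k_linear_sl[OF lin_proj, symmetric] counit_l)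
  finally show ?case by (simp add: xi_single)
next
  case (Cons b \<beta>)
  show ?case
  proof (cases "\<beta> = []")
    case True
    then show ?thesis by (simp add: xi_cons xi_single)
  next
    case False
    define T where "T = (\<lambda>u v w. proj b u * X \<beta> v * proj d w)"
    have T: "k_trilinear sm T" unfolding T_def by (rule trilin_prod[OF lin_proj lin_X lin_proj])
    have "X ((b # \<beta>) @ [d]) x = sl (\<lambda>u v. proj b u * X (\<beta> @ [d]) v) (D x)"
      by (simp add: xi_cons)
    also have "\<dots> = sl (\<lambda>u v. sl (\<lambda>c w. T u c w) (D v)) (D x)"
      by (simp add: Cons.IH sl_mult_left T_def mult.assoc)
    also have "\<dots> = sl (\<lambda>u v. sl (\<lambda>c w. T c w v) (D u)) (D x)"
      using coassoc[OF T, of x] by (simp add: sl_def)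
    also have "\<dots> = sl (\<lambda>u v. X (b # \<beta>) u * proj d v) (D x)"
      by (simp add: xi_cons[OF False] sl_mult_right T_def)
    finally show ?thesis .
  qed
qed

end



definition comps :: "nat \<Rightarrow> nat list set" where
  "comps n = {\<alpha>. is_comp \<alpha> \<and> sum_list \<alpha> = n}"

lemma comp_len: "is_comp \<alpha> \<Longrightarrow> length \<alpha> \<le> sum_list \<alpha>"
  by (induction \<alpha>) (auto simp: is_comp_def)

lemma finite_comps: "finite (comps n)"
proof (rule finite_subset)
  show "comps n \<subseteq> {xs. set xs \<subseteq> {..n} \<and> length xs \<le> n}"
    by (auto simp: comps_def dest: comp_len member_le_sum_list)
qed (rule finite_lists_length_le, simp)

lemma comps_0: "comps 0 = {[]}"
  by (auto simp: comps_def is_comp_def) (metis list.set_intros(1) neq_Nil_conv not_less0 sum_list_eq_0_iff)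

lemma comps_reindex: "0 < n \<Longrightarrow> (\<Sum>p<n. \<Sum>\<beta>\<in>comps p. G (\<beta> @ [n - p])) = (\<Sum>\<alpha>\<in>comps n. G \<alpha>)"
proof -
  assume n: "0 < n"
  have "(\<Sum>p<n. \<Sum>\<beta>\<in>comps p. G (\<beta> @ [n - p])) = (\<Sum>(p, \<beta>)\<in>Sigma {..<n} comps. G (\<beta> @ [n - p]))"
    by (rule sum.Sigma) (auto simp: finite_comps)
  also have "\<dots> = (\<Sum>\<alpha>\<in>comps n. G \<alpha>)"
  proof (rule sum.reindex_bij_witness[where j = "\<lambda>(p, \<beta>). \<beta> @ [n - p]" and i = "\<lambda>\<alpha>. (n - last \<alpha>, butlast \<alpha>)"])
    fix a assume "a \<in> Sigma {..<n} comps"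
    then obtain p \<beta> where a: "a = (p, \<beta>)" "p < n" "is_comp \<beta>" "sum_list \<beta> = p"
      by (auto simp: comps_def)
    then show "(\<lambda>\<alpha>. (n - last \<alpha>, butlast \<alpha>)) ((\<lambda>(p, \<beta>). \<beta> @ [n - p]) a) = a" by auto
    show "(\<lambda>(p, \<beta>). \<beta> @ [n - p]) a \<in> comps n" using a by (auto simp: comps_def is_comp_def)
    show "G ((\<lambda>(p, \<beta>). \<beta> @ [n - p]) a) = (case a of (p, \<beta>) \<Rightarrow> G (\<beta> @ [n - p]))" by (simp add: a)
  next
    fix b assume "b \<in> comps n"
    then have b: "is_comp b" "sum_list b = n" by (auto simp: comps_def)
    then have bne: "b \<noteq> []" using n by auto
    have bb: "b = butlast b @ [last b]" using bne by simp
    have sb: "sum_list (butlast b) + last b = n" using b(2) by (subst (asm) bb) simp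
    have lp: "0 < last b" using b(1) bne by (auto simp: is_comp_def)
    have cb: "is_comp (butlast b)" using b(1) by (auto simp: is_comp_def dest: in_set_butlastD)
    show "(\<lambda>(p, \<beta>). \<beta> @ [n - p]) ((\<lambda>\<alpha>. (n - last \<alpha>, butlast \<alpha>)) b) = b"
      using sb bb by simp
    show "(\<lambda>\<alpha>. (n - last \<alpha>, butlast \<alpha>)) b \<in> Sigma {..<n} comps"
      using sb lp cb n by (auto simp: comps_def)
  qed
  finally show ?thesis .
qed

context HA begin

lemma sm_neg: "sm (- c) y = - sm c y"
  by (metis mult_minus1 sm_assoc sm_neg1)

lemma S_one: "S 1 = 1"
proof -
  have B: "k_bilinear sm (\<lambda>a b. S a * b)" using bilin_prod[OF lin_S lin_id] .
  have "sl (\<lambda>a b. S a * b) (D 1) = sm (e 1) 1" by (rule antipode)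
  then show ?thesis using teq_sl[OF D_one_teq B] by (simp add: e_one sm_one)
qed

lemma proj0_eq: "proj 0 b = sm (e b) 1"
proof -
  obtain c where c: "proj 0 b = sm c 1" using connected by blast
  obtain N where N: "b = (\<Sum>n\<le>N. proj n b)" using proj_decomp by blast
  have "e b = (\<Sum>n\<le>N. e (proj n b))" by (subst N) (rule e_sum)
  also have "\<dots> = (\<Sum>n\<in>{0}. e (proj n b))"
    by (rule sum.mono_neutral_right) (auto simp: e_proj)
  also have "\<dots> = c" by (simp add: c e_sm e_one)
  finally show ?thesis using c by simp
qed

lemma S_proj0: "S (proj 0 x) = sm (e x) 1"
  using lin_S unfolding k_linear_def by (metis proj0_eq S_one)

lemma S_step: "0 < n \<Longrightarrow> S (proj n x) = - (\<Sum>p<n. sl (\<lambda>u v. S (proj p u) * proj (n - p) v) (D x))"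
proof -
  assume n: "0 < n"
  have B: "k_bilinear sm (\<lambda>a b. S a * b)" using bilin_prod[OF lin_S lin_id] .
  have "0 = sl (\<lambda>a b. S a * b) (D (proj n x))" by (simp add: antipode e_proj[OF n] sm_zero_l)
  also have "\<dots> = (\<Sum>p\<le>n. sl (\<lambda>u v. S (proj p u) * proj (n - p) v) (D x))" by (rule D_proj[OF B])
  also have "\<dots> = (\<Sum>p<n. sl (\<lambda>u v. S (proj p u) * proj (n - p) v) (D x)) + sl (\<lambda>u v. S (proj n u) * proj 0 v) (D x)"
    by (simp add: lessThan_Suc_atMost[symmetric])
  also have "sl (\<lambda>u v. S (proj n u) * proj 0 v) (D x) = sl (\<lambda>u v. S (proj n (sm (e v) u))) (D x)"
    using lin_S lin_proj unfolding k_linear_def by (simp add: proj0_eq sm_mult_r[symmetric] sm_one)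
  also have "\<dots> = S (proj n x)"
    by (simp add: k_linear_sl[OF lin_S, symmetric] k_linear_sl[OF lin_proj, symmetric] counit_r)
  finally show ?thesis by (simp add: eq_neg_iff_add_eq_0 add.commute)
qed

lemma S_main: "S (proj n x) = (\<Sum>\<alpha>\<in>comps n. sm ((-1) ^ length \<alpha>) (X \<alpha> x))"
proof (induction n arbitrary: x rule: less_induct)
  case (less n)
  show ?case
  proof (cases "n = 0")
    case True then show ?thesis by (simp add: comps_0 S_proj0 xi_nil sm_one)
  next
    case False
    then have n: "0 < n" by simp
    have "S (proj n x) = - (\<Sum>p<n. sl (\<lambda>u v. S (proj p u) * proj (n - p) v) (D x))" by (rule S_step[OF n])
    also have "\<dots> = - (\<Sum>p<n. \<Sum>\<beta>\<in>comps p. sm ((-1) ^ length \<beta>) (X (\<beta> @ [n - p]) x))"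
    proof -
      have "sl (\<lambda>u v. S (proj p u) * proj (n - p) v) (D x) = (\<Sum>\<beta>\<in>comps p. sm ((-1) ^ length \<beta>) (X (\<beta> @ [n - p]) x))"
        if p: "p < n" for p
      proof -
        have "sl (\<lambda>u v. S (proj p u) * proj (n - p) v) (D x)
            = sl (\<lambda>u v. \<Sum>\<beta>\<in>comps p. sm ((-1) ^ length \<beta>) (X \<beta> u * proj (n - p) v)) (D x)"
          by (simp add: less.IH[OF p] sum_distrib_right sm_mult)
        also have "\<dots> = (\<Sum>\<beta>\<in>comps p. sl (\<lambda>u v. sm ((-1) ^ length \<beta>) (X \<beta> u * proj (n - p) v)) (D x))"
          by (rule sl_sum)
        also have "\<dots> = (\<Sum>\<beta>\<in>comps p. sm ((-1) ^ length \<beta>) (X (\<beta> @ [n - p]) x))"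
          by (simp add: k_linear_sl[OF lin_sm, symmetric] X_snoc)
        finally show ?thesis .
      qed
      then show ?thesis by simp
    qed
    also have "\<dots> = (\<Sum>p<n. \<Sum>\<beta>\<in>comps p. sm ((-1) ^ length (\<beta> @ [n - p])) (X (\<beta> @ [n - p]) x))"
      by (simp add: sum_negf[symmetric] sm_neg)
    also have "\<dots> = (\<Sum>\<alpha>\<in>comps n. sm ((-1) ^ length \<alpha>) (X \<alpha> x))"
      by (rule comps_reindex[OF n])
    finally show ?thesis .
  qed
qed

end



theorem corollary6p3:
  fixes sm :: "'k::comm_ring_1 \<Rightarrow> 'h::comm_ring_1 \<Rightarrow> 'h"
    and proj :: "nat \<Rightarrow> 'h \<Rightarrow> 'h"
    and \<Delta> :: "'h \<Rightarrow> ('h \<times> 'h) list"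
    and \<epsilon> :: "'h \<Rightarrow> 'k"
    and S :: "'h \<Rightarrow> 'h"
  assumes "comm_connected_graded_hopf sm proj \<Delta> \<epsilon> S"
  shows "finite {\<alpha>. is_comp \<alpha> \<and> xi sm proj \<Delta> \<epsilon> \<alpha> h \<noteq> 0} \<and>
         S h = (\<Sum>\<alpha> \<in> {\<alpha>. is_comp \<alpha> \<and> xi sm proj \<Delta> \<epsilon> \<alpha> h \<noteq> 0}.
                  sm (eps_P (qsym_S (qsym_M \<alpha> :: nat list \<Rightarrow> 'k))) (xi sm proj \<Delta> \<epsilon> \<alpha> h))"
proof -
  interpret HA sm proj \<Delta> \<epsilon> S by (rule HA.intro[OF assms])
  obtain N where N: "h = (\<Sum>n\<le>N. proj n h)" using proj_decomp by blast
  define F where "F = {\<alpha>. is_comp \<alpha> \<and> X \<alpha> h \<noteq> 0}"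
  define U where "U = (\<Union>n\<in>{..N}. comps n)"
  have finU: "finite U" unfolding U_def by (auto simp: finite_comps)
  have FU: "F \<subseteq> U" unfolding F_def U_def comps_def using X_nonzero_le[OF N] by auto
  have finF: "finite F" using finite_subset[OF FU finU] .
  define g where "g = (\<lambda>\<alpha>. sm ((-1) ^ length \<alpha>) (X \<alpha> h))"
  have "S h = (\<Sum>n\<le>N. S (proj n h))" by (subst N) (rule k_linear_sum[OF lin_S])
  also have "\<dots> = (\<Sum>n\<le>N. sum g (comps n))" by (simp add: S_main g_def)
  also have "\<dots> = sum g U" unfolding U_def
    by (rule sum.UNION_disjoint[symmetric]) (auto simp: finite_comps, auto simp: comps_def)
  also have "\<dots> = sum g F"
    by (rule sum.mono_neutral_right[OF finU FU]) (auto simp: g_def F_def U_def comps_def sm_zero_r)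
  also have "\<dots> = (\<Sum>\<alpha>\<in>F. sm (eps_P (qsym_S (qsym_M \<alpha> :: nat list \<Rightarrow> 'k))) (X \<alpha> h))"
    by (simp add: g_def eps_S_M)
  finally show ?thesis using finF unfolding F_def by simp
qed


end
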